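(* Let $L$ be an interval locale and $f:E\to F$ a morphism of sheaves of monomorphisms on $L_{+}$. If $f$ is a stalkwise epimorphism (respectively stalkwise monomorphism, stalkwise isomorphism), then $f$ is an epimorphism (respectively monomorphism, isomorphism) of sheaves on $L_{+}$.
   Context: A locale $L$ is a complete lattice in which finite meets distribute over arbitrary joins, with Grothendieck topology: $\{b_j\le a\}$ covers $a$ iff $\bigvee_j b_j=a$. $L$ is an interval if it is totally ordered and densely ordered. $1$ is the top element and $i$ the bottom element of $L$; $L_{+}=L\sqcup\{0\}$ with a new bottom $0<i$. A sheaf of monomorphisms on $L_{+}$ is a sheaf $F$ with $F(b)\to F(a)$ injective for all $a\le b$ in $L$. For a sheaf $F$ on $L_{+}$ and $x\in L_{+}\setminus\{1\}$, the stalk is $F_x=\varinjlim_{s\in L_{+},\,x<s}F(s)$ (so $F_0\cong F(i)$). A map $E\to F$ is a stalkwise epimorphism (monomorphism, isomorphism) if $E_x\to F_x$ is surjective (injective, bijective) for all $x\in L_{+}\setminus\{1\}$. *)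

theory Defs
  imports Main "HOL-Library.Option_ord"
begin

text \<open>The locale L is a type 'a of class complete_linorder and dense_order
 (a complete, totally and densely ordered lattice: an interval).
 L_+ is the type 'a option ordered by Option_ord: None is the new bottom 0,
 Some a corresponds to a in L.  A (pre)sheaf on L_+ is given by its sets of
 sections F :: 'a option => 'b set together with restriction maps
 r b a :: 'b => 'b from F b to F a (for a <= b).\<close>

definition is_presheaf :: "('a::complete_lattice option \<Rightarrow> 'b set) \<Rightarrow> ('a option \<Rightarrow> 'a option \<Rightarrow> 'b \<Rightarrow> 'b) \<Rightarrow> bool" where
  "is_presheaf F r \<longleftrightarrow>
     (\<forall>a b. a \<le> b \<longrightarrow> (\<forall>x\<in>F b. r b a x \<in> F a)) \<and>
     (\<forall>a. \<forall>x\<in>F a. r a a x = x) \<and>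
     (\<forall>a b c. a \<le> b \<longrightarrow> b \<le> c \<longrightarrow> (\<forall>x\<in>F c. r b a (r c b x) = r c a x))"

definition is_sheaf :: "('a::complete_lattice option \<Rightarrow> 'b set) \<Rightarrow> ('a option \<Rightarrow> 'a option \<Rightarrow> 'b \<Rightarrow> 'b) \<Rightarrow> bool" where
  "is_sheaf F r \<longleftrightarrow> is_presheaf F r \<and>
     (\<forall>a S s. (\<forall>b\<in>S. b \<le> a) \<longrightarrow> Sup S = a \<longrightarrow> (\<forall>b\<in>S. s b \<in> F b) \<longrightarrow>
        (\<forall>b\<in>S. \<forall>c\<in>S. r b (inf b c) (s b) = r c (inf b c) (s c)) \<longrightarrow>
        (\<exists>!x. x \<in> F a \<and> (\<forall>b\<in>S. r a b x = s b)))"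

definition is_mono_sheaf :: "('a::complete_lattice option \<Rightarrow> 'b set) \<Rightarrow> ('a option \<Rightarrow> 'a option \<Rightarrow> 'b \<Rightarrow> 'b) \<Rightarrow> bool" where
  "is_mono_sheaf F r \<longleftrightarrow> is_sheaf F r \<and>
     (\<forall>a b. a \<le> b \<longrightarrow> inj_on (r (Some b) (Some a)) (F (Some b)))"

definition sheaf_mor ::
  "('a::complete_lattice option \<Rightarrow> 'b set) \<Rightarrow> ('a option \<Rightarrow> 'a option \<Rightarrow> 'b \<Rightarrow> 'b) \<Rightarrow>
   ('a option \<Rightarrow> 'c set) \<Rightarrow> ('a option \<Rightarrow> 'a option \<Rightarrow> 'c \<Rightarrow> 'c) \<Rightarrow>
   ('a option \<Rightarrow> 'b \<Rightarrow> 'c) \<Rightarrow> bool" where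
  "sheaf_mor E rE F rF f \<longleftrightarrow>
     (\<forall>a. \<forall>x\<in>E a. f a x \<in> F a) \<and>
     (\<forall>a b. a \<le> b \<longrightarrow> (\<forall>x\<in>E b. rF b a (f b x) = f a (rE b a x)))"

text \<open>Epimorphism in the category of sheaves on L_+ (tested against all sheaves
 whose sections live in the type 'g; the theorem quantifies over all types 'g).\<close>
definition sheaf_epi ::
  "'g itself \<Rightarrow> ('a::complete_lattice option \<Rightarrow> 'b set) \<Rightarrow> ('a option \<Rightarrow> 'a option \<Rightarrow> 'b \<Rightarrow> 'b) \<Rightarrow>
   ('a option \<Rightarrow> 'c set) \<Rightarrow> ('a option \<Rightarrow> 'a option \<Rightarrow> 'c \<Rightarrow> 'c) \<Rightarrow>
   ('a option \<Rightarrow> 'b \<Rightarrow> 'c) \<Rightarrow> bool" where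
  "sheaf_epi T E rE F rF f \<longleftrightarrow>
     (\<forall>(G :: 'a option \<Rightarrow> 'g set) rG g h.
        is_sheaf G rG \<and> sheaf_mor F rF G rG g \<and> sheaf_mor F rF G rG h \<and>
        (\<forall>a. \<forall>x\<in>E a. g a (f a x) = h a (f a x)) \<longrightarrow>
        (\<forall>a. \<forall>y\<in>F a. g a y = h a y))"

definition sheaf_monic ::
  "'g itself \<Rightarrow> ('a::complete_lattice option \<Rightarrow> 'b set) \<Rightarrow> ('a option \<Rightarrow> 'a option \<Rightarrow> 'b \<Rightarrow> 'b) \<Rightarrow>
   ('a option \<Rightarrow> 'c set) \<Rightarrow> ('a option \<Rightarrow> 'a option \<Rightarrow> 'c \<Rightarrow> 'c) \<Rightarrow>
   ('a option \<Rightarrow> 'b \<Rightarrow> 'c) \<Rightarrow> bool" where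
  "sheaf_monic T E rE F rF f \<longleftrightarrow>
     (\<forall>(G :: 'a option \<Rightarrow> 'g set) rG g h.
        is_sheaf G rG \<and> sheaf_mor G rG E rE g \<and> sheaf_mor G rG E rE h \<and>
        (\<forall>a. \<forall>z\<in>G a. f a (g a z) = f a (h a z)) \<longrightarrow>
        (\<forall>a. \<forall>z\<in>G a. g a z = h a z))"

definition sheaf_iso ::
  "('a::complete_lattice option \<Rightarrow> 'b set) \<Rightarrow> ('a option \<Rightarrow> 'a option \<Rightarrow> 'b \<Rightarrow> 'b) \<Rightarrow>
   ('a option \<Rightarrow> 'c set) \<Rightarrow> ('a option \<Rightarrow> 'a option \<Rightarrow> 'c \<Rightarrow> 'c) \<Rightarrow>
   ('a option \<Rightarrow> 'b \<Rightarrow> 'c) \<Rightarrow> bool" where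
  "sheaf_iso E rE F rF f \<longleftrightarrow>
     (\<exists>g. sheaf_mor F rF E rE g \<and> (\<forall>a. \<forall>x\<in>E a. g a (f a x) = x) \<and>
          (\<forall>a. \<forall>y\<in>F a. f a (g a y) = y))"

text \<open>Stalk F_x = colim_{s > x} F(s): germ equivalence classes of pairs (s,u)
 with x < s, u in F s.\<close>
definition germ_rel :: "('a::complete_lattice option \<Rightarrow> 'b set) \<Rightarrow> ('a option \<Rightarrow> 'a option \<Rightarrow> 'b \<Rightarrow> 'b) \<Rightarrow>
   'a option \<Rightarrow> (('a option \<times> 'b) \<times> ('a option \<times> 'b)) set" where
  "germ_rel F r x = {((s,u),(t,v)). x < s \<and> u \<in> F s \<and> x < t \<and> v \<in> F t \<and>
       (\<exists>q. x < q \<and> q \<le> s \<and> q \<le> t \<and> r s q u = r t q v)}"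

definition stalk :: "('a::complete_lattice option \<Rightarrow> 'b set) \<Rightarrow> ('a option \<Rightarrow> 'a option \<Rightarrow> 'b \<Rightarrow> 'b) \<Rightarrow>
   'a option \<Rightarrow> ('a option \<times> 'b) set set" where
  "stalk F r x = (SIGMA s:{s. x < s}. F s) // germ_rel F r x"

definition stalk_map :: "('a::complete_lattice option \<Rightarrow> 'c set) \<Rightarrow> ('a option \<Rightarrow> 'a option \<Rightarrow> 'c \<Rightarrow> 'c) \<Rightarrow>
   ('a option \<Rightarrow> 'b \<Rightarrow> 'c) \<Rightarrow> 'a option \<Rightarrow> ('a option \<times> 'b) set \<Rightarrow> ('a option \<times> 'c) set" where
  "stalk_map F rF f x C = (\<Union>(s,u)\<in>C. germ_rel F rF x `` {(s, f s u)})"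

definition stalkwise_epi where
  "stalkwise_epi E rE F rF f \<longleftrightarrow> (\<forall>x. x \<noteq> Some top \<longrightarrow>
      (\<forall>y\<in>stalk F rF x. \<exists>z\<in>stalk E rE x. stalk_map F rF f x z = y))"

definition stalkwise_mono where
  "stalkwise_mono E rE F rF f \<longleftrightarrow> (\<forall>x. x \<noteq> Some top \<longrightarrow>
      inj_on (stalk_map F rF f x) (stalk E rE x))"

definition stalkwise_iso where
  "stalkwise_iso E rE F rF f \<longleftrightarrow> (\<forall>x. x \<noteq> Some top \<longrightarrow>
      bij_betw (stalk_map F rF f x) (stalk E rE x) (stalk F rF x))"

end

theory Submission
  imports Defs
begin

lemma presheaf_facts:
  assumes "is_presheaf F r"
  shows "\<And>a b x. a \<le> b \<Longrightarrow> x \<in> F b \<Longrightarrow> r b a x \<in> F a"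
    and "\<And>a x. x \<in> F a \<Longrightarrow> r a a x = x"
    and "\<And>a b c x. a \<le> b \<Longrightarrow> b \<le> c \<Longrightarrow> x \<in> F c \<Longrightarrow> r b a (r c b x) = r c a x"
  using assms unfolding is_presheaf_def by blast+

lemma sheaf_None_unique:
  assumes "is_sheaf F r" "x \<in> F None" "y \<in> F None"
  shows "x = y"
proof -
  have "\<exists>!x. x \<in> F None \<and> (\<forall>b\<in>{}. r None b x = (\<lambda>_. undefined) b)"
    using assms(1) unfolding is_sheaf_def
    by (metis empty_Sup empty_iff)
  then show ?thesis using assms by auto
qed

lemma sheaf_None_ex:
  assumes "is_sheaf F r"
  shows "\<exists>x. x \<in> F None"
proof -
  have "\<exists>!x. x \<in> F None \<and> (\<forall>b\<in>{}. r None b x = (\<lambda>_. undefined) b)"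
    using assms(1) unfolding is_sheaf_def
    by (metis empty_Sup empty_iff)
  then show ?thesis by auto
qed

lemma sheaf_glue:
  assumes "is_sheaf F r" "\<forall>b\<in>S. b \<le> a" "Sup S = a" "\<forall>b\<in>S. s b \<in> F b"
    "\<forall>b\<in>S. \<forall>c\<in>S. r b (inf b c) (s b) = r c (inf b c) (s c)"
  shows "\<exists>!x. x \<in> F a \<and> (\<forall>b\<in>S. r a b x = s b)"
proof -
  have H: "\<forall>a S s. (\<forall>b\<in>S. b \<le> a) \<longrightarrow> Sup S = a \<longrightarrow> (\<forall>b\<in>S. s b \<in> F b) \<longrightarrow>
        (\<forall>b\<in>S. \<forall>c\<in>S. r b (inf b c) (s b) = r c (inf b c) (s c)) \<longrightarrow>
        (\<exists>!x. x \<in> F a \<and> (\<forall>b\<in>S. r a b x = s b))"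
    using assms(1) unfolding is_sheaf_def by (elim conjE)
  show ?thesis using assms(2-5) by (intro H[rule_format]) auto
qed

lemma sheaf_local:
  assumes "is_sheaf F r" "\<forall>b\<in>S. b \<le> a" "Sup S = a" "x \<in> F a" "y \<in> F a"
    "\<forall>b\<in>S. r a b x = r a b y"
  shows "x = y"
proof -
  have P: "is_presheaf F r" using assms(1) unfolding is_sheaf_def by blast
  let ?s = "\<lambda>b. r a b x"
  have "\<exists>!z. z \<in> F a \<and> (\<forall>b\<in>S. r a b z = ?s b)"
  proof (rule sheaf_glue[OF assms(1) assms(2) assms(3)])
    show "\<forall>b\<in>S. ?s b \<in> F b" using assms presheaf_facts(1)[OF P] by blast
    show "\<forall>b\<in>S. \<forall>c\<in>S. r b (inf b c) (?s b) = r c (inf b c) (?s c)"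
    proof (intro ballI)
      fix b c assume bc: "b \<in> S" "c \<in> S"
      have "r b (inf b c) (?s b) = r a (inf b c) x"
        using presheaf_facts(3)[OF P, of "inf b c" b a x] bc assms(2,4) by simp
      moreover have "r c (inf b c) (?s c) = r a (inf b c) x"
        using presheaf_facts(3)[OF P, of "inf b c" c a x] bc assms(2,4) by simp
      ultimately show "r b (inf b c) (?s b) = r c (inf b c) (?s c)" by simp
    qed
  qed
  then show ?thesis using assms by auto
qed

lemma germ_equiv:
  fixes F :: "('a::complete_linorder) option \<Rightarrow> 'b set"
  assumes P: "is_presheaf F r"
  shows "equiv (SIGMA s:{s. x < s}. F s) (germ_rel F r x)"
proof (rule equivI)
  show "germ_rel F r x \<subseteq> (SIGMA s:{s. x < s}. F s) \<times> (SIGMA s:{s. x < s}. F s)"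
    unfolding germ_rel_def by auto
  show "refl_on (SIGMA s:{s. x < s}. F s) (germ_rel F r x)"
    unfolding refl_on_def
  proof
    fix p assume "p \<in> (SIGMA s:{s. x < s}. F s)"
    then obtain s u where p: "p = (s,u)" "x < s" "u \<in> F s" by auto
    have "r s s u = r s s u" by simp
    then show "(p,p) \<in> germ_rel F r x" unfolding germ_rel_def p
      using p(2,3) by blast
  qed
  show "sym (germ_rel F r x)"
    unfolding sym_def
  proof (intro allI impI)
    fix p1 p2 assume a: "(p1, p2) \<in> germ_rel F r x"
    obtain s u t v where pp: "p1 = (s,u)" "p2 = (t,v)" by (metis prod.exhaust)
    from a obtain q where "x < q" "q \<le> s" "q \<le> t" "r s q u = r t q v"
      and "x < s" "u \<in> F s" "x < t" "v \<in> F t"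
      unfolding pp germ_rel_def by blast
    then show "(p2, p1) \<in> germ_rel F r x" unfolding pp germ_rel_def by force
  qed
  show "trans (germ_rel F r x)"
    unfolding trans_def
  proof (intro allI impI)
    fix p1 p2 p3
    assume a: "(p1, p2) \<in> germ_rel F r x" "(p2, p3) \<in> germ_rel F r x"
    obtain s u t v w z where pp: "p1 = (s,u)" "p2 = (t,v)" "p3 = (w,z)"
      by (metis prod.exhaust)
    from a(1) obtain q1 where q1: "x < q1" "q1 \<le> s" "q1 \<le> t" "r s q1 u = r t q1 v"
      and mem: "x < s" "u \<in> F s" "x < t" "v \<in> F t"
      unfolding pp germ_rel_def by blast
    from a(2) obtain q2 where q2: "x < q2" "q2 \<le> t" "q2 \<le> w" "r t q2 v = r w q2 z"
      and mem2: "x < w" "z \<in> F w"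
      unfolding pp germ_rel_def by blast
    define m where "m = min q1 q2"
    have m: "x < m" "m \<le> q1" "m \<le> q2" using q1(1) q2(1) by (auto simp: m_def)
    have ms: "m \<le> s" using m(2) q1(2) by (rule order_trans)
    have mt: "m \<le> t" using m(2) q1(3) by (rule order_trans)
    have mw: "m \<le> w" using m(3) q2(3) by (rule order_trans)
    have "r s m u = r q1 m (r s q1 u)"
      using presheaf_facts(3)[OF P, of m q1 s u] m(2) q1(2) mem(2) by simp
    also have "\<dots> = r q1 m (r t q1 v)" using q1(4) by simp
    also have "\<dots> = r t m v" using presheaf_facts(3)[OF P, of m q1 t v] m(2) q1(3) mem(4) by simp
    also have "\<dots> = r q2 m (r t q2 v)" using presheaf_facts(3)[OF P, of m q2 t v] m(3) q2(2) mem(4) by simp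
    also have "\<dots> = r q2 m (r w q2 z)" using q2(4) by simp
    also have "\<dots> = r w m z" using presheaf_facts(3)[OF P, of m q2 w z] m(3) q2(3) mem2(2) by simp
    finally have eq: "r s m u = r w m z" .
    have "((s,u),(w,z)) \<in> germ_rel F r x"
      unfolding germ_rel_def using m(1) ms mw eq mem mem2 by blast
    then show "(p1, p3) \<in> germ_rel F r x" using pp by simp
  qed
qed

lemma local_image:
  fixes E :: "('a::complete_linorder) option \<Rightarrow> 'b set"
  assumes PE: "is_presheaf E rE" and PF: "is_presheaf F rF"
    and M: "sheaf_mor E rE F rF f"
    and SE: "stalkwise_epi E rE F rF f"
    and y: "y \<in> F (Some b)"
  defines "S \<equiv> {q. q \<le> Some b \<and> (\<exists>e\<in>E q. f q e = rF (Some b) q y)}"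
  shows "Sup S = Some b"
proof -
  have loc: "\<exists>q\<in>S. x < q" if "x < Some b" for x
  proof -
    have xt: "x \<noteq> Some top" using that by (cases x) auto
    let ?y = "germ_rel F rF x `` {(Some b, y)}"
    have "?y \<in> stalk F rF x" unfolding stalk_def using that y by (intro quotientI) auto
    moreover have "\<forall>y\<in>stalk F rF x. \<exists>z\<in>stalk E rE x. stalk_map F rF f x z = y"
      using SE xt unfolding stalkwise_epi_def by blast
    ultimately obtain Z where Z: "Z \<in> stalk E rE x" "stalk_map F rF f x Z = ?y"
      by blast
    from Z(1) have "Z \<in> (SIGMA s:{s. x < s}. E s) // germ_rel E rE x" by (simp add: stalk_def)
    then obtain p where p: "p \<in> (SIGMA s:{s. x < s}. E s)" "Z = germ_rel E rE x `` {p}"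
      by (rule quotientE)
    obtain s u where su: "p = (s,u)" by (metis prod.exhaust)
    have "(s,u) \<in> Z" using p su equiv_class_self[OF germ_equiv[OF PE]] by blast
    have fu: "f s u \<in> F s" using M p su unfolding sheaf_mor_def by auto
    have "(s, f s u) \<in> germ_rel F rF x `` {(s, f s u)}"
      using equiv_class_self[OF germ_equiv[OF PF]] p su fu by auto
    hence "(s, f s u) \<in> stalk_map F rF f x Z"
      unfolding stalk_map_def using \<open>(s,u) \<in> Z\<close> by blast
    hence "((Some b, y), (s, f s u)) \<in> germ_rel F rF x" using Z by simp
    then obtain q where q: "x < q" "q \<le> Some b" "q \<le> s" "rF (Some b) q y = rF s q (f s u)"
      unfolding germ_rel_def by auto
    have "rF s q (f s u) = f q (rE s q u)" using M q(3) p su unfolding sheaf_mor_def by auto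
    moreover have "rE s q u \<in> E q" using presheaf_facts(1)[OF PE] q(3) p su by auto
    ultimately have "q \<in> S" unfolding S_def using q by auto
    then show ?thesis using q by auto
  qed
  have le: "Sup S \<le> Some b" unfolding S_def by (rule Sup_least) auto
  show ?thesis
  proof (rule ccontr)
    assume "Sup S \<noteq> Some b"
    hence "Sup S < Some b" using le by auto
    then obtain q where "q \<in> S" "Sup S < q" using loc by blast
    then show False using Sup_upper[of q S] by auto
  qed
qed

lemma sections_inj:
  fixes E :: "('a::complete_linorder) option \<Rightarrow> 'b set"
  assumes SHE: "is_mono_sheaf E rE" and PF: "is_presheaf F rF"
    and M: "sheaf_mor E rE F rF f"
    and SM: "stalkwise_mono E rE F rF f"
    and e: "e1 \<in> E a" "e2 \<in> E a" "f a e1 = f a e2"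
  shows "e1 = e2"
proof -
  have SE: "is_sheaf E rE" using SHE unfolding is_mono_sheaf_def by blast
  show ?thesis
proof (cases a)
  case None
  then show ?thesis using sheaf_None_unique[OF SE, of e1 e2] e by simp
next
  case (Some b)
  have PE: "is_presheaf E rE" using SE unfolding is_sheaf_def by blast
  have cls: "stalk_map F rF f None (germ_rel E rE None `` {(a,e)}) = germ_rel F rF None `` {(a, f a e)}"
    if ee: "e \<in> E a" for e
  proof -
    have cl: "germ_rel F rF None `` {(s, f s u)} = germ_rel F rF None `` {(a, f a e)}"
      if su: "(s,u) \<in> germ_rel E rE None `` {(a,e)}" for s u
    proof -
      from su obtain q where q: "None < q" "q \<le> a" "q \<le> s" "rE a q e = rE s q u"
        and mem: "None < s" "u \<in> E s" unfolding germ_rel_def by auto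
      have "rF a q (f a e) = f q (rE a q e)" using M q ee unfolding sheaf_mor_def by auto
      moreover have "rF s q (f s u) = f q (rE s q u)" using M q mem unfolding sheaf_mor_def by auto
      moreover have "f a e \<in> F a" "f s u \<in> F s" using M ee mem unfolding sheaf_mor_def by auto
      ultimately have "((s, f s u), (a, f a e)) \<in> germ_rel F rF None"
        unfolding germ_rel_def using q mem Some by (auto intro!: exI[of _ q])
      then show ?thesis by (rule equiv_class_eq[OF germ_equiv[OF PF]])
    qed
    have self: "(a,e) \<in> germ_rel E rE None `` {(a,e)}"
      using equiv_class_self[OF germ_equiv[OF PE]] ee Some by auto
    have eq1: "(\<Union>(s,u)\<in>germ_rel E rE None `` {(a,e)}. germ_rel F rF None `` {(s, f s u)})
       = (\<Union>p\<in>germ_rel E rE None `` {(a,e)}. germ_rel F rF None `` {(a, f a e)})"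
    proof (rule SUP_cong[OF refl])
      fix p assume p: "p \<in> germ_rel E rE None `` {(a,e)}"
      obtain s u where su: "p = (s,u)" by (cases p)
      show "(case p of (s,u) \<Rightarrow> germ_rel F rF None `` {(s, f s u)}) = germ_rel F rF None `` {(a, f a e)}"
        unfolding su using cl[of s u] p su by simp
    qed
    have eq2: "(\<Union>p\<in>germ_rel E rE None `` {(a,e)}. germ_rel F rF None `` {(a, f a e)})
        = germ_rel F rF None `` {(a, f a e)}"
      using self by blast
    show ?thesis unfolding stalk_map_def using eq1 eq2 by simp
  qed
  let ?Z1 = "germ_rel E rE None `` {(a,e1)}" and ?Z2 = "germ_rel E rE None `` {(a,e2)}"
  have in1: "?Z1 \<in> stalk E rE None" unfolding stalk_def using e Some by (intro quotientI) auto
  have in2: "?Z2 \<in> stalk E rE None" unfolding stalk_def using e Some by (intro quotientI) auto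
  have "stalk_map F rF f None ?Z1 = stalk_map F rF f None ?Z2"
    using cls e by simp
  moreover have "inj_on (stalk_map F rF f None) (stalk E rE None)"
    using SM unfolding stalkwise_mono_def by simp
  ultimately have "?Z1 = ?Z2" using in1 in2 by (meson inj_onD)
  moreover have "(a,e2) \<in> ?Z2" using equiv_class_self[OF germ_equiv[OF PE]] e Some by auto
  ultimately have "((a,e1),(a,e2)) \<in> germ_rel E rE None" by auto
  then obtain q where q: "None < q" "q \<le> a" "rE a q e1 = rE a q e2"
    unfolding germ_rel_def by auto
  then obtain c where c: "q = Some c" by (cases q) auto
  have "inj_on (rE (Some b) (Some c)) (E (Some b))"
    using SHE q c Some unfolding is_mono_sheaf_def by auto
  then show ?thesis using q c Some e by (auto dest: inj_onD)
qed
qed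

lemma sections_surj:
  fixes E :: "('a::complete_linorder) option \<Rightarrow> 'b set"
  assumes SHE: "is_mono_sheaf E rE" and SHF: "is_mono_sheaf F rF"
    and M: "sheaf_mor E rE F rF f"
    and SEp: "stalkwise_epi E rE F rF f"
    and inj: "\<And>a e1 e2. e1 \<in> E a \<Longrightarrow> e2 \<in> E a \<Longrightarrow> f a e1 = f a e2 \<Longrightarrow> e1 = e2"
    and y: "y \<in> F a"
  shows "\<exists>e\<in>E a. f a e = y"
proof (cases a)
  case None
  have SE: "is_sheaf E rE" and SF: "is_sheaf F rF"
    using SHE SHF unfolding is_mono_sheaf_def by blast+
  obtain e where "e \<in> E None" using sheaf_None_ex[OF SE] by blast
  moreover have "f None e \<in> F None" using M calculation unfolding sheaf_mor_def by auto
  ultimately show ?thesis using sheaf_None_unique[OF SF] y None by blast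
next
  case (Some b)
  have SE: "is_sheaf E rE" and SF: "is_sheaf F rF"
    using SHE SHF unfolding is_mono_sheaf_def by blast+
  have PE: "is_presheaf E rE" using SE unfolding is_sheaf_def by blast
  have PF: "is_presheaf F rF" using SF unfolding is_sheaf_def by blast
  define S where "S = {q. q \<le> Some b \<and> (\<exists>e\<in>E q. f q e = rF (Some b) q y)}"
  have Sup: "Sup S = Some b" unfolding S_def
    using local_image[OF PE PF M SEp] y Some by simp
  define s where "s q = (SOME e. e \<in> E q \<and> f q e = rF (Some b) q y)" for q
  have s: "s q \<in> E q \<and> f q (s q) = rF (Some b) q y" if "q \<in> S" for q
  proof -
    have "\<exists>e. e \<in> E q \<and> f q e = rF (Some b) q y" using that unfolding S_def by blast
    then show ?thesis unfolding s_def by (rule someI_ex)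
  qed
  have Sle: "\<forall>q\<in>S. q \<le> Some b" unfolding S_def by auto
  have "\<exists>!x. x \<in> E (Some b) \<and> (\<forall>q\<in>S. rE (Some b) q x = s q)"
  proof (rule sheaf_glue[OF SE Sle Sup])
    show "\<forall>q\<in>S. s q \<in> E q" using s by blast
    show "\<forall>q\<in>S. \<forall>c\<in>S. rE q (inf q c) (s q) = rE c (inf q c) (s c)"
    proof (intro ballI)
      fix q c assume qc: "q \<in> S" "c \<in> S"
      let ?m = "inf q c"
      have MM: "\<And>a b x. a \<le> b \<Longrightarrow> x \<in> E b \<Longrightarrow> rF b a (f b x) = f a (rE b a x)"
        using M unfolding sheaf_mor_def by blast
      have "f ?m (rE q ?m (s q)) = rF q ?m (f q (s q))"
        using MM[OF inf_le1 conjunct1[OF s[OF qc(1)]]] by simp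
      also have "\<dots> = rF (Some b) ?m y" using s[OF qc(1)] presheaf_facts(3)[OF PF, of ?m q "Some b" y] qc Sle y Some
        by simp
      also have "\<dots> = rF c ?m (f c (s c))" using s[OF qc(2)] presheaf_facts(3)[OF PF, of ?m c "Some b" y] qc Sle y Some
        by simp
      also have "\<dots> = f ?m (rE c ?m (s c))"
        using MM[OF inf_le2 conjunct1[OF s[OF qc(2)]]] by simp
      finally have eq: "f ?m (rE q ?m (s q)) = f ?m (rE c ?m (s c))" .
      have "rE q ?m (s q) \<in> E ?m" using presheaf_facts(1)[OF PE, of ?m q] s[OF qc(1)] by simp
      moreover have "rE c ?m (s c) \<in> E ?m" using presheaf_facts(1)[OF PE, of ?m c] s[OF qc(2)] by simp
      ultimately show "rE q ?m (s q) = rE c ?m (s c)"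
        using inj eq by blast
    qed
  qed
  then obtain e where e: "e \<in> E (Some b)" "\<forall>q\<in>S. rE (Some b) q e = s q" by blast
  have fe: "f (Some b) e \<in> F (Some b)" using M e unfolding sheaf_mor_def by auto
  have "f (Some b) e = y"
  proof (rule sheaf_local[OF SF Sle Sup fe])
    show "y \<in> F (Some b)" using y Some by simp
    show "\<forall>q\<in>S. rF (Some b) q (f (Some b) e) = rF (Some b) q y"
      using M e s Sle unfolding sheaf_mor_def by auto
  qed
  then show ?thesis using e Some by auto
qed

theorem lemma32:
  fixes E :: "('a::{complete_linorder, dense_order}) option \<Rightarrow> 'b set"
    and rE :: "'a option \<Rightarrow> 'a option \<Rightarrow> 'b \<Rightarrow> 'b"
    and F :: "'a option \<Rightarrow> 'c set"
    and rF :: "'a option \<Rightarrow> 'a option \<Rightarrow> 'c \<Rightarrow> 'c"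
    and f :: "'a option \<Rightarrow> 'b \<Rightarrow> 'c"
  assumes "is_mono_sheaf E rE" and "is_mono_sheaf F rF"
    and "sheaf_mor E rE F rF f"
  shows "(stalkwise_epi E rE F rF f \<longrightarrow> sheaf_epi TYPE('g) E rE F rF f) \<and>
         (stalkwise_mono E rE F rF f \<longrightarrow> sheaf_monic TYPE('h) E rE F rF f) \<and>
         (stalkwise_iso E rE F rF f \<longrightarrow> sheaf_iso E rE F rF f)"
proof -
  have SE: "is_sheaf E rE" and SF: "is_sheaf F rF"
    using assms(1,2) unfolding is_mono_sheaf_def by blast+
  have PE: "is_presheaf E rE" using SE unfolding is_sheaf_def by blast
  have PF: "is_presheaf F rF" using SF unfolding is_sheaf_def by blast
  have M: "sheaf_mor E rE F rF f" by fact
  have epi: "sheaf_epi TYPE('g) E rE F rF f" if SEp: "stalkwise_epi E rE F rF f"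
    unfolding sheaf_epi_def
  proof (intro allI impI ballI)
    fix G :: "'a option \<Rightarrow> 'g set" and rG g h a y
    assume H: "is_sheaf G rG \<and> sheaf_mor F rF G rG g \<and> sheaf_mor F rF G rG h \<and>
        (\<forall>a. \<forall>x\<in>E a. g a (f a x) = h a (f a x))"
      and y: "y \<in> F a"
    have eqH: "\<And>a x. x \<in> E a \<Longrightarrow> g a (f a x) = h a (f a x)" using H by blast
    show "g a y = h a y"
    proof (cases a)
      case None
      obtain e where "e \<in> E None" using sheaf_None_ex[OF SE] by blast
      moreover have "f None e \<in> F None" using M calculation unfolding sheaf_mor_def by auto
      ultimately have "y = f None e" using sheaf_None_unique[OF SF, of y] y None by simp
      then show ?thesis using eqH[OF \<open>e \<in> E None\<close>] None by simp
    next
      case (Some b)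
      define S where "S = {q. q \<le> Some b \<and> (\<exists>e\<in>E q. f q e = rF (Some b) q y)}"
      have Sup: "Sup S = Some b" unfolding S_def
        using local_image[OF PE PF M SEp] y Some by simp
      have Sle: "\<forall>q\<in>S. q \<le> Some b" unfolding S_def by auto
      have "g (Some b) y = h (Some b) y"
      proof (rule sheaf_local[of G rG, OF _ Sle Sup])
        show "is_sheaf G rG" using H by blast
        show "g (Some b) y \<in> G (Some b)" "h (Some b) y \<in> G (Some b)"
          using H y Some unfolding sheaf_mor_def by auto
        show "\<forall>q\<in>S. rG (Some b) q (g (Some b) y) = rG (Some b) q (h (Some b) y)"
        proof
          fix q assume q: "q \<in> S"
          then obtain e where e: "e \<in> E q" "f q e = rF (Some b) q y" unfolding S_def by auto
          have "rG (Some b) q (g (Some b) y) = g q (rF (Some b) q y)"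
            using H y Some q Sle unfolding sheaf_mor_def by auto
          also have "\<dots> = h q (rF (Some b) q y)" using eqH[OF e(1)] e(2) by simp
          also have "\<dots> = rG (Some b) q (h (Some b) y)"
            using H y Some q Sle unfolding sheaf_mor_def by auto
          finally show "rG (Some b) q (g (Some b) y) = rG (Some b) q (h (Some b) y)" .
        qed
      qed
      then show ?thesis using Some by simp
    qed
  qed
  have mono: "sheaf_monic TYPE('h) E rE F rF f" if SM: "stalkwise_mono E rE F rF f"
    unfolding sheaf_monic_def
  proof (intro allI impI ballI)
    fix G :: "'a option \<Rightarrow> 'h set" and rG g h a z
    assume H: "is_sheaf G rG \<and> sheaf_mor G rG E rE g \<and> sheaf_mor G rG E rE h \<and>
        (\<forall>a. \<forall>z\<in>G a. f a (g a z) = f a (h a z))"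
      and z: "z \<in> G a"
    have gz: "g a z \<in> E a" and hz: "h a z \<in> E a"
      using H z unfolding sheaf_mor_def by auto
    have "f a (g a z) = f a (h a z)" using H z by blast
    then show "g a z = h a z"
      by (rule sections_inj[OF assms(1) PF M SM gz hz])
  qed
  have iso: "sheaf_iso E rE F rF f" if SI: "stalkwise_iso E rE F rF f"
  proof -
    have SM: "stalkwise_mono E rE F rF f"
      unfolding stalkwise_mono_def
    proof (intro allI impI)
      fix x :: "'a option" assume "x \<noteq> Some top"
      then have "bij_betw (stalk_map F rF f x) (stalk E rE x) (stalk F rF x)"
        using SI unfolding stalkwise_iso_def by simp
      then show "inj_on (stalk_map F rF f x) (stalk E rE x)" by (rule bij_betw_imp_inj_on)
    qed
    have SEp: "stalkwise_epi E rE F rF f"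
      unfolding stalkwise_epi_def
    proof (intro allI impI ballI)
      fix x :: "'a option" and y assume "x \<noteq> Some top" and y: "y \<in> stalk F rF x"
      then have "bij_betw (stalk_map F rF f x) (stalk E rE x) (stalk F rF x)"
        using SI unfolding stalkwise_iso_def by simp
      then have "stalk_map F rF f x ` stalk E rE x = stalk F rF x" by (rule bij_betw_imp_surj_on)
      then show "\<exists>z\<in>stalk E rE x. stalk_map F rF f x z = y" using y by (metis imageE)
    qed
    have inj: "e1 = e2" if "e1 \<in> E a" "e2 \<in> E a" "f a e1 = f a e2" for a e1 e2
      using sections_inj[OF assms(1) PF M SM that] .
    have surj: "\<exists>e\<in>E a. f a e = y" if "y \<in> F a" for a y
      using sections_surj[OF assms(1,2) M SEp inj that] .
    define g where "g a y = inv_into (E a) (f a) y" for a y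
    have g1: "g a y \<in> E a" "f a (g a y) = y" if "y \<in> F a" for a y
      using surj[OF that] unfolding g_def by (auto intro: inv_into_into f_inv_into_f)
    have g2: "g a (f a x) = x" if "x \<in> E a" for a x
      unfolding g_def using inj that by (simp add: inv_into_f_f inj_on_def)
    have "sheaf_mor F rF E rE g"
      unfolding sheaf_mor_def
    proof (intro conjI allI impI ballI)
      fix a y assume "y \<in> F a" then show "g a y \<in> E a" using g1 by blast
    next
      fix a b y assume ab: "a \<le> b" and y: "y \<in> F b"
      have A: "rE b a (g b y) \<in> E a" using presheaf_facts(1)[OF PE] ab g1 y by blast
      have B: "rF b a y \<in> F a" using presheaf_facts(1)[OF PF] ab y by blast
      have MM: "\<And>a b x. a \<le> b \<Longrightarrow> x \<in> E b \<Longrightarrow> rF b a (f b x) = f a (rE b a x)"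
        using M unfolding sheaf_mor_def by blast
      have "f a (rE b a (g b y)) = rF b a (f b (g b y))"
        using MM[OF ab g1(1)[OF y]] by simp
      also have "\<dots> = rF b a y" using g1 y by simp
      also have "\<dots> = f a (g a (rF b a y))" using g1 B by simp
      finally have "f a (rE b a (g b y)) = f a (g a (rF b a y))" .
      then show "rE b a (g b y) = g a (rF b a y)"
        using inj[OF A g1(1)[OF B]] by simp
    qed
    then show ?thesis unfolding sheaf_iso_def using g1 g2 by blast
  qed
  show ?thesis using epi mono iso by blast
qed

end
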